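(* Let $\lambda>1$ and let $D_U,D_V$ be the $n\times n$ symmetric matrices $D_U=W_2^{-1}-W_2^{-1}B-B^TW_2^{-1}+B^TW_2^{-1}B$, $D_V=W_1^{-1}-A^TW_1^{-1}-W_1^{-1}A$, where $A=K_V^0(I+\Sigma_2)^{-1}$, $W_1=K_V^0-K_V^0(I+\Sigma_2)^{-1}K_V^0$, $B=K_U^0(K_U^0+\Sigma_1)^{-1}$, $W_2=K_U^0-K_U^0(K_U^0+\Sigma_1)^{-1}K_U^0$ for given symmetric positive definite $K_U^0,K_V^0,\Sigma_1,\Sigma_2$ with $K_U^0+K_V^0=I$. Consider the problem $$(\mathrm P)\quad\max_{\tilde q}\ \int\tilde q(u)\Big(-\tfrac12u^TD_Uu-\ln\tilde q(u)\Big)du+\lambda\int\tilde q(v)\Big(-\tfrac12v^TD_Vv-\ln\tilde q(v)\Big)dv\quad\text{s.t. } \mathbb E_{\tilde q(u,v)}[UU^T+VV^T]=I$$ over joint pdfs $\tilde q(u,v)$. Suppose an optimal solution of $(\mathrm P)$ has marginals $U\sim\mathcal N(0,K_U)$, $V\sim\mathcal N(0,K_V)$ with $K_U,K_V\succ0$ and $K_U+K_V=I$. Then $(K_U,K_V)$ is optimal for $$\max_{K_U,K_V\succ0}\ -\mathrm{tr}(D_UK_U)-\lambda\,\mathrm{tr}(D_VK_V)+\ln|K_U|+\lambda\ln|K_V|\quad\text{s.t. } K_U+K_V=I.$$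
   Context: $|M|$ denotes the determinant; $M\succ0$ means positive definite. *)

theory Defs
  imports "HOL-Analysis.Analysis"
begin

definition posdef :: "real^'n^'n \<Rightarrow> bool" where
  "posdef M \<longleftrightarrow> transpose M = M \<and> (\<forall>x. x \<noteq> 0 \<longrightarrow> 0 < x \<bullet> (M *v x))"

definition margU :: "((real^'n) \<times> (real^'n) \<Rightarrow> real) \<Rightarrow> real^'n \<Rightarrow> real" where
  "margU f u = (\<integral>v. f (u, v) \<partial>lborel)"

definition margV :: "((real^'n) \<times> (real^'n) \<Rightarrow> real) \<Rightarrow> real^'n \<Rightarrow> real" where
  "margV f v = (\<integral>u. f (u, v) \<partial>lborel)"

definition ent_integrand :: "real^'n^'n \<Rightarrow> (real^'n \<Rightarrow> real) \<Rightarrow> real^'n \<Rightarrow> real" where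
  "ent_integrand D q u = q u * (- (u \<bullet> (D *v u)) / 2 - ln (q u))"

definition ent_term :: "real^'n^'n \<Rightarrow> (real^'n \<Rightarrow> real) \<Rightarrow> real" where
  "ent_term D q = (\<integral>u. ent_integrand D q u \<partial>lborel)"

definition P_obj :: "real \<Rightarrow> real^'n^'n \<Rightarrow> real^'n^'n \<Rightarrow> ((real^'n) \<times> (real^'n) \<Rightarrow> real) \<Rightarrow> real" where
  "P_obj lam DU DV f = ent_term DU (margU f) + lam * ent_term DV (margV f)"

definition P_feasible :: "real^'n^'n \<Rightarrow> real^'n^'n \<Rightarrow> ((real^'n) \<times> (real^'n) \<Rightarrow> real) \<Rightarrow> bool" where
  "P_feasible DU DV f \<longleftrightarrow>
     f \<in> borel_measurable lborel \<and> (\<forall>z. 0 \<le> f z) \<and>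
     integrable lborel f \<and> (\<integral>z. f z \<partial>lborel) = 1 \<and>
     (\<forall>i j. integrable lborel (\<lambda>(u, v). f (u, v) * (u$i * u$j + v$i * v$j)) \<and>
            (\<integral>(u, v). f (u, v) * (u$i * u$j + v$i * v$j) \<partial>lborel) = (if i = j then 1 else 0)) \<and>
     integrable lborel (ent_integrand DU (margU f)) \<and>
     integrable lborel (ent_integrand DV (margV f))"

definition gauss_density :: "real^'n^'n \<Rightarrow> real^'n \<Rightarrow> real" where
  "gauss_density K u =
     exp (- (u \<bullet> (matrix_inv K *v u)) / 2) / sqrt ((2 * pi) ^ CARD('n) * det K)"

definition K_obj :: "real \<Rightarrow> real^'n^'n \<Rightarrow> real^'n^'n \<Rightarrow> real^'n^'n \<Rightarrow> real^'n^'n \<Rightarrow> real" where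
  "K_obj lam DU DV KU KV =
     - trace (DU ** KU) - lam * trace (DV ** KV) + ln (det KU) + lam * ln (det KV)"

end

theory Submission
  imports Defs "HOL-Probability.Probability"
begin

typedef 'a wo = "UNIV :: 'a set" morphisms rep_wo abs_wo by simp

definition wo_enc :: "'a \<Rightarrow> nat" where "wo_enc = (SOME f. inj f)"

lemma wo_enc_inj: "inj (wo_enc :: 'a::finite \<Rightarrow> nat)"
proof -
  obtain f :: "'a \<Rightarrow> nat" where "inj_on f UNIV"
    using finite_imp_inj_to_nat_seg[of "UNIV :: 'a set"] by auto
  then show ?thesis unfolding wo_enc_def by (metis someI_ex)
qed

instance wo :: (finite) finite
proof
  have "(UNIV :: 'a wo set) = abs_wo ` UNIV"
    by (metis abs_wo_cases surj_def)
  moreover have "finite (range (abs_wo :: 'a \<Rightarrow> 'a wo))" by simp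
  ultimately show "finite (UNIV :: 'a wo set)" by simp
qed

instantiation wo :: (finite) linorder
begin
definition less_eq_wo :: "'a wo \<Rightarrow> 'a wo \<Rightarrow> bool" where
  "less_eq_wo x y \<longleftrightarrow> wo_enc (rep_wo x) \<le> wo_enc (rep_wo y)"
definition less_wo :: "'a wo \<Rightarrow> 'a wo \<Rightarrow> bool" where
  "less_wo x y \<longleftrightarrow> wo_enc (rep_wo x) < wo_enc (rep_wo y)"
instance proof
  fix x y :: "'a wo"
  assume "x \<le> y" "y \<le> x"
  then have "wo_enc (rep_wo x) = wo_enc (rep_wo y)" by (simp add: less_eq_wo_def)
  then show "x = y" using wo_enc_inj rep_wo_inject by (metis injD)
qed (auto simp: less_eq_wo_def less_wo_def)
end

instance wo :: (finite) wellorder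
proof
  fix P :: "'a wo \<Rightarrow> bool" and a
  assume H: "\<And>x. (\<And>y. y < x \<Longrightarrow> P y) \<Longrightarrow> P x"
  have "\<forall>x. wo_enc (rep_wo x) = n \<longrightarrow> P x" for n
  proof (induction n rule: less_induct)
    case (less n)
    show ?case using H less by (auto simp: less_wo_def)
  qed
  then show "P a" by blast
qed

lemma prod_Basis_vec:
  "(\<Prod>b\<in>(Basis::(real^'n) set). f b) = (\<Prod>i\<in>UNIV. f (axis i 1))"
proof -
  have B: "(Basis::(real^'n) set) = range (\<lambda>i::'n. axis i (1::real))"
    by (auto simp: Basis_vec_def)
  have "inj (\<lambda>i::'n. axis i (1::real))" by (auto simp: inj_def axis_eq_axis)
  then show ?thesis unfolding B by (simp add: prod.reindex)
qed

lemma emeasure_box_vec: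
  "emeasure lborel (box l u :: (real^'n) set) =
     (if \<forall>i. l$i \<le> u$i then ennreal (\<Prod>i\<in>UNIV. (u$i - l$i)) else 0)"
proof -
  have "(\<forall>b\<in>(Basis::(real^'n) set). l \<bullet> b \<le> u \<bullet> b) \<longleftrightarrow> (\<forall>i. l$i \<le> u$i)"
    by (auto simp: Basis_vec_def inner_axis)
  then show ?thesis
    by (simp add: emeasure_lborel_box_eq prod_Basis_vec inner_axis)
qed

lemma relabel_measurable:
  "(\<lambda>x::real^'a. \<chi> j. x $ r j) \<in> borel_measurable borel"
  by (intro borel_measurable_continuous_onI continuous_on_vec_lambda continuous_intros)

lemma lborel_relabel:
  fixes r :: "'b::finite \<Rightarrow> 'a::finite"
  assumes "bij r"
  shows "distr lborel borel (\<lambda>x::real^'a. \<chi> j. x $ r j) = (lborel :: (real^'b) measure)"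
proof (rule lborel_eqI[symmetric])
  let ?P = "\<lambda>x::real^'a. \<chi> j. x $ r j"
  fix l u :: "real^'b"
  assume le: "\<And>b. b \<in> Basis \<Longrightarrow> l \<bullet> b \<le> u \<bullet> b"
  have le': "l$i \<le> u$i" for i
    using le[of "axis i 1"] by (simp add: inner_axis)
  have rr: "\<And>i. r (inv r i) = i" "\<And>j. inv r (r j) = j"
    using assms by (auto simp: bij_def surj_f_inv_f inv_f_f)
  have pre: "?P -` box l u = box (\<chi> i. l $ inv r i) (\<chi> i. u $ inv r i)"
  proof (rule set_eqI)
    fix x :: "real^'a"
    have "(\<forall>j. l$j < x$r j \<and> x$r j < u$j) \<longleftrightarrow> (\<forall>i. l$inv r i < x$i \<and> x$i < u$inv r i)"
      by (metis rr)
    then show "x \<in> ?P -` box l u \<longleftrightarrow> x \<in> box (\<chi> i. l $ inv r i) (\<chi> i. u $ inv r i)"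
      by (simp add: mem_box_cart)
  qed
  have "(\<Prod>i\<in>UNIV. u $ inv r i - l $ inv r i) = (\<Prod>j\<in>UNIV. u$j - l$j)"
  proof -
    have "bij_betw (inv r) UNIV UNIV" using assms by (simp add: bij_imp_bij_inv)
    then show ?thesis by (rule prod.reindex_bij_betw)
  qed
  then have "emeasure lborel (?P -` box l u) = ennreal (\<Prod>j\<in>UNIV. u$j - l$j)"
    unfolding pre emeasure_box_vec using le' by simp
  moreover have "(\<Prod>j\<in>UNIV. u$j - l$j) = (\<Prod>b\<in>Basis. (u - l) \<bullet> b)"
    by (simp add: prod_Basis_vec inner_axis)
  ultimately show "emeasure (distr lborel borel ?P) (box l u) = (\<Prod>b\<in>Basis. (u - l) \<bullet> b)"
    by (subst emeasure_distr) (auto simp: relabel_measurable)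
qed simp

lemma permutes_UNIV_iff_bij: "p permutes UNIV \<longleftrightarrow> bij p"
  using bij_imp_permutes[of p UNIV] permutes_bij[of p UNIV] by auto

lemma det_relabel:
  fixes r :: "'b::finite \<Rightarrow> 'a::finite" and A :: "real^'a^'a"
  assumes r: "bij r"
  shows "det (\<chi> i j. A $ r i $ r j) = det A"
proof -
  let ?r' = "inv r"
  have rr: "\<And>i. r (?r' i) = i" "\<And>j. ?r' (r j) = j"
    using r by (auto simp: bij_def surj_f_inv_f inv_f_f)
  let ?h = "\<lambda>q. r \<circ> q \<circ> ?r'"
  have hb: "bij_betw ?h {q. q permutes (UNIV::'b set)} {p. p permutes (UNIV::'a set)}"
  proof (rule bij_betw_byWitness[where f' = "\<lambda>p. ?r' \<circ> p \<circ> r"])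
    show "\<forall>a\<in>{q. q permutes (UNIV::'b set)}. ?r' \<circ> ?h a \<circ> r = a"
      by (auto simp: fun_eq_iff rr)
    show "\<forall>a\<in>{p. p permutes (UNIV::'a set)}. ?h (?r' \<circ> a \<circ> r) = a"
      by (auto simp: fun_eq_iff rr)
    show "?h ` {q. q permutes UNIV} \<subseteq> {p. p permutes UNIV}"
      using r by (auto simp: permutes_UNIV_iff_bij intro!: bij_comp bij_imp_bij_inv)
    show "(\<lambda>p. ?r' \<circ> p \<circ> r) ` {p. p permutes UNIV} \<subseteq> {q. q permutes UNIV}"
      using r by (auto simp: permutes_UNIV_iff_bij intro!: bij_comp bij_imp_bij_inv)
  qed
  have sgn: "sign (?h q) = sign q" if q: "q permutes (UNIV::'b set)" for q
  proof -
    interpret permutes_bij_finite q UNIV UNIV r ?r' "?h q"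
      by unfold_locales (use q r rr in \<open>auto simp: bij_betw_def fun_eq_iff intro!: eq_reflection\<close>)
    show ?thesis using sign_p' by simp
  qed
  have prd: "(\<Prod>i\<in>UNIV. A $ r i $ r (q i)) = (\<Prod>j\<in>UNIV. A $ j $ ?h q j)" for q
  proof -
    have "(\<Prod>j\<in>UNIV. A $ j $ ?h q j) = (\<Prod>i\<in>UNIV. A $ r i $ ?h q (r i))"
      using r by (simp add: prod.reindex_bij_betw[symmetric])
    then show ?thesis by (simp add: rr)
  qed
  have "det (\<chi> i j. A $ r i $ r j) =
      (\<Sum>q\<in>{q. q permutes (UNIV::'b set)}. of_int (sign (?h q)) * (\<Prod>j\<in>UNIV. A $ j $ ?h q j))"
    unfolding det_def by (intro sum.cong) (auto simp: sgn prd)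
  also have "\<dots> = det A"
    unfolding det_def by (rule sum.reindex_bij_betw[OF hb, where g = "\<lambda>p. of_int (sign p) * (\<Prod>j\<in>UNIV. A $ j $ p j)"])
  finally show ?thesis .
qed

lemma minv:
  fixes A :: "real^'n^'n"
  assumes "det A \<noteq> 0"
  shows "A ** matrix_inv A = mat 1" "matrix_inv A ** A = mat 1"
proof -
  have "invertible A" using assms invertible_det_nz by blast
  then have "\<exists>A'. A ** A' = mat 1 \<and> A' ** A = mat 1" unfolding invertible_def .
  then have "A ** matrix_inv A = mat 1 \<and> matrix_inv A ** A = mat 1"
    unfolding matrix_inv_def by (rule someI_ex)
  then show "A ** matrix_inv A = mat 1" "matrix_inv A ** A = mat 1" by auto
qed

lemma minv_unique:
  fixes A B :: "real^'n^'n"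
  assumes "A ** B = mat 1"
  shows "matrix_inv A = B"
proof -
  have BA: "B ** A = mat 1" using assms matrix_left_right_inverse by blast
  have "det A * det B = 1" using det_mul[of A B] assms by simp
  then have dA: "det A \<noteq> 0" by auto
  have "matrix_inv A = matrix_inv A ** (A ** B)" by (simp add: assms)
  also have "\<dots> = (matrix_inv A ** A) ** B" by (simp add: matrix_mul_assoc)
  also have "\<dots> = B" by (simp add: minv(2)[OF dA])
  finally show ?thesis .
qed

lemma det_minv:
  fixes A :: "real^'n^'n"
  assumes "det A \<noteq> 0"
  shows "det (matrix_inv A) = 1 / det A"
  using det_mul[of A "matrix_inv A"] minv(1)[OF assms] assms by (simp add: field_simps)

lemma lborel_linear_wo:
  fixes N :: "real^('m::{finite,wellorder})^('m::{finite,wellorder})"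
  assumes dN: "det N \<noteq> 0"
  shows "lborel = density (distr lborel borel (\<lambda>x. N *v x)) (\<lambda>_. ennreal \<bar>det N\<bar>)"
proof (rule lborel_eqI)
  let ?f = "\<lambda>x. N *v x"
  let ?g = "\<lambda>x. matrix_inv N *v x"
  have fm: "?f \<in> borel_measurable borel"
    by (intro borel_measurable_continuous_onI linear_continuous_on matrix_vector_mul_bounded_linear)
  fix l u :: "real^('m::{finite,wellorder})"
  assume le: "\<And>b. b \<in> Basis \<Longrightarrow> l \<bullet> b \<le> u \<bullet> b"
  have pre: "?f -` box l u = ?g ` box l u"
  proof (rule set_eqI)
    fix x
    have "x = ?g (?f x)" by (simp add: matrix_vector_mul_assoc minv(2)[OF dN])
    moreover have "\<And>y. ?f (?g y) = y" by (simp add: matrix_vector_mul_assoc minv(1)[OF dN])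
    ultimately show "x \<in> ?f -` box l u \<longleftrightarrow> x \<in> ?g ` box l u" by force
  qed
  have lin: "linear ?g" by (simp add: matrix_vector_mul_linear)
  have "box l u \<in> lmeasurable" by simp
  then have mimg: "measure lebesgue (?g ` box l u) = \<bar>det (matrix ?g)\<bar> * measure lebesgue (box l u)"
    by (rule measure_linear_image[OF lin])
  have "?f -` box l u \<in> sets borel"
    using measurable_sets[OF fm, of "box l u"] by simp
  then have gb: "?g ` box l u \<in> sets borel"
    unfolding pre .
  have bnd: "bounded (?g ` box l u)"
    by (intro bounded_linear_image matrix_vector_mul_bounded_linear bounded_box)
  have "emeasure lborel (?g ` box l u) = ennreal (measure lborel (?g ` box l u))"
    using emeasure_bounded_finite[OF bnd] by (intro emeasure_eq_ennreal_measure) auto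
  also have "measure lborel (?g ` box l u) = \<bar>det (matrix_inv N)\<bar> * measure lborel (box l u)"
    using mimg gb by simp
  finally have e1: "emeasure lborel (?f -` box l u) = ennreal (\<bar>1 / det N\<bar> * measure lborel (box l u))"
    by (simp add: pre det_minv[OF dN])
  have "emeasure (density (distr lborel borel ?f) (\<lambda>_. ennreal \<bar>det N\<bar>)) (box l u)
      = ennreal \<bar>det N\<bar> * emeasure lborel (?f -` box l u)"
    using fm by (simp add: emeasure_density_const emeasure_distr)
  also have "\<dots> = ennreal (measure lborel (box l u))"
    unfolding e1 using dN by (simp add: ennreal_mult'[symmetric] abs_mult[symmetric])
  also have "\<dots> = (\<Prod>b\<in>Basis. (u - l) \<bullet> b)"
    using le by (simp add: measure_lborel_box_eq)
  finally show "emeasure (density (distr lborel borel ?f) (\<lambda>_. ennreal \<bar>det N\<bar>)) (box l u) = (\<Prod>b\<in>Basis. (u - l) \<bullet> b)" .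
qed simp

lemma bij_rep_wo: "bij rep_wo"
  by (rule o_bij[where g = abs_wo]) (auto simp: fun_eq_iff abs_wo_inverse rep_wo_inverse)

lemma bij_abs_wo: "bij abs_wo"
  by (rule o_bij[where g = rep_wo]) (auto simp: fun_eq_iff abs_wo_inverse rep_wo_inverse)

lemma relabel_mult:
  fixes r :: "'b::finite \<Rightarrow> 'a::finite" and N :: "real^'a^'a"
  assumes r: "bij r"
  shows "(\<chi> i j. N $ r i $ r j) *v (\<chi> j. x $ r j) = (\<chi> j. (N *v x) $ r j)"
proof -
  have "(\<Sum>j\<in>UNIV. N $ r i $ r j * x $ r j) = (\<Sum>k\<in>UNIV. N $ r i $ k * x $ k)" for i
    using r by (rule sum.reindex_bij_betw[where g = "\<lambda>k. N $ r i $ k * x $ k"])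
  then show ?thesis by (simp add: vec_eq_iff matrix_vector_mult_def)
qed

lemma emeasure_lborel_linear_vimage:
  fixes N :: "real^'n^'n"
  assumes dN: "det N \<noteq> 0" and B: "B \<in> sets borel"
  shows "emeasure lborel B = ennreal \<bar>det N\<bar> * emeasure lborel ((\<lambda>x. N *v x) -` B)"
proof -
  let ?S = "\<lambda>y::real^('n wo). \<chi> i. y $ abs_wo i"
  let ?N' = "\<chi> i j. N $ rep_wo i $ rep_wo j :: real^('n wo)^('n wo)"
  let ?f = "\<lambda>x. N *v x"
  let ?f' = "\<lambda>y. ?N' *v y"
  have dN': "det ?N' = det N" using det_relabel[OF bij_rep_wo] .
  have Sm: "?S \<in> borel_measurable borel" by (rule relabel_measurable)
  have fm: "?f \<in> borel_measurable borel"
    by (intro borel_measurable_continuous_onI linear_continuous_on matrix_vector_mul_bounded_linear)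
  have f'm: "?f' \<in> borel_measurable borel"
    by (intro borel_measurable_continuous_onI linear_continuous_on matrix_vector_mul_bounded_linear)
  have tr: "emeasure lborel X = emeasure lborel (?S -` X)" if "X \<in> sets borel" for X :: "(real^'n) set"
  proof -
    have "emeasure lborel X = emeasure (distr lborel borel ?S) X"
      by (simp only: lborel_relabel[OF bij_abs_wo])
    also have "\<dots> = emeasure lborel (?S -` X)"
      using that Sm by (simp add: emeasure_distr)
    finally show ?thesis .
  qed
  have comm: "?S (?f' y) = ?f (?S y)" for y
  proof -
    have e: "(\<chi> i j. ?N' $ abs_wo i $ abs_wo j :: real^'n^'n) = N"
      by (simp add: vec_eq_iff abs_wo_inverse)
    show ?thesis using relabel_mult[OF bij_abs_wo, of ?N' y] unfolding e by simp
  qed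
  have SB: "?S -` B \<in> sets borel" using measurable_sets[OF Sm B] by simp
  have fB: "?f -` B \<in> sets borel" using measurable_sets[OF fm B] by simp
  have "emeasure lborel B = emeasure lborel (?S -` B)" using tr[OF B] .
  also have "\<dots> = emeasure (density (distr lborel borel ?f') (\<lambda>_. ennreal \<bar>det ?N'\<bar>)) (?S -` B)"
    using lborel_linear_wo[of ?N'] dN dN' by simp
  also have "\<dots> = ennreal \<bar>det N\<bar> * emeasure lborel (?f' -` (?S -` B))"
    using SB f'm dN' by (simp add: emeasure_density_const emeasure_distr)
  also have "?f' -` (?S -` B) = ?S -` (?f -` B)" using comm by auto
  also have "emeasure lborel (?S -` (?f -` B)) = emeasure lborel (?f -` B)"
    using tr[OF fB] by simp
  finally show ?thesis .
qed

lemma lborel_linear: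
  fixes N :: "real^'n^'n"
  assumes dN: "det N \<noteq> 0"
  shows "lborel = density (distr lborel borel (\<lambda>x. N *v x)) (\<lambda>_. ennreal \<bar>det N\<bar>)"
proof (rule lborel_eqI)
  let ?f = "\<lambda>x. N *v x"
  have fm: "?f \<in> borel_measurable borel"
    by (intro borel_measurable_continuous_onI linear_continuous_on matrix_vector_mul_bounded_linear)
  fix l u :: "real^'n"
  assume le: "\<And>b. b \<in> Basis \<Longrightarrow> l \<bullet> b \<le> u \<bullet> b"
  have "emeasure (density (distr lborel borel ?f) (\<lambda>_. ennreal \<bar>det N\<bar>)) (box l u)
      = ennreal \<bar>det N\<bar> * emeasure lborel (?f -` box l u)"
    using fm by (simp add: emeasure_density_const emeasure_distr)
  also have "\<dots> = emeasure lborel (box l u)"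
    using emeasure_lborel_linear_vimage[OF dN, of "box l u"] by simp
  also have "\<dots> = (\<Prod>b\<in>Basis. (u - l) \<bullet> b)"
    using le by (simp add: emeasure_lborel_box_eq)
  finally show "emeasure (density (distr lborel borel ?f) (\<lambda>_. ennreal \<bar>det N\<bar>)) (box l u) = (\<Prod>b\<in>Basis. (u - l) \<bullet> b)" .
qed simp

lemma lin_meas: "(\<lambda>x. (N::real^'n^'m) *v x) \<in> borel_measurable borel"
  by (intro borel_measurable_continuous_onI linear_continuous_on matrix_vector_mul_bounded_linear)

lemma cov_lin:
  fixes N :: "real^'n^'n" and h :: "real^'n \<Rightarrow> real"
  assumes dN: "det N \<noteq> 0" and hm: "h \<in> borel_measurable borel"
  shows "integrable lborel h \<longleftrightarrow> integrable lborel (\<lambda>x. \<bar>det N\<bar> * h (N *v x))"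
    and "integral\<^sup>L lborel h = (\<integral>x. \<bar>det N\<bar> * h (N *v x) \<partial>lborel)"
proof -
  let ?f = "\<lambda>x. N *v x"
  let ?D = "density (distr lborel borel ?f) (\<lambda>_. ennreal \<bar>det N\<bar>)"
  have L: "lborel = ?D" by (rule lborel_linear[OF dN])
  have fm: "?f \<in> measurable lborel borel" using lin_meas[of N] by simp
  have "integrable lborel h \<longleftrightarrow> integrable ?D h" using arg_cong[OF L, of "\<lambda>M. integrable M h"] .
  also have "\<dots> \<longleftrightarrow> integrable (distr lborel borel ?f) (\<lambda>x. \<bar>det N\<bar> *\<^sub>R h x)"
    by (rule integrable_density) (use hm in auto)
  also have "\<dots> \<longleftrightarrow> integrable lborel (\<lambda>x. \<bar>det N\<bar> *\<^sub>R h (?f x))"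
    by (rule integrable_distr_eq[OF fm]) (use hm in auto)
  finally show "integrable lborel h \<longleftrightarrow> integrable lborel (\<lambda>x. \<bar>det N\<bar> * h (N *v x))" by simp
  have "integral\<^sup>L lborel h = integral\<^sup>L ?D h" using arg_cong[OF L, of "\<lambda>M. integral\<^sup>L M h"] .
  also have "\<dots> = integral\<^sup>L (distr lborel borel ?f) (\<lambda>x. \<bar>det N\<bar> *\<^sub>R h x)"
    by (rule integral_density) (use hm in auto)
  also have "\<dots> = integral\<^sup>L lborel (\<lambda>x. \<bar>det N\<bar> *\<^sub>R h (?f x))"
    by (rule integral_distr[OF fm]) (use hm in auto)
  finally show "integral\<^sup>L lborel h = (\<integral>x. \<bar>det N\<bar> * h (N *v x) \<partial>lborel)" by simp
qed

lemma sum_Basis_vec_comp: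
  fixes f :: "real^'n \<Rightarrow> real"
  shows "(\<Sum>b\<in>(Basis::(real^'n) set). f b *\<^sub>R b) $ i = f (axis i 1)"
proof -
  have B: "(Basis::(real^'n) set) = range (\<lambda>i::'n. axis i (1::real))"
    by (auto simp: Basis_vec_def)
  have inj: "inj (\<lambda>i::'n. axis i (1::real))" by (auto simp: inj_def axis_eq_axis)
  have "(\<Sum>b\<in>(Basis::(real^'n) set). f b *\<^sub>R b) $ i = (\<Sum>j\<in>UNIV. f (axis j 1) * (axis j 1 :: real^'n) $ i)"
    unfolding B by (simp add: sum.reindex[OF inj] sum_component)
  also have "\<dots> = (\<Sum>j\<in>UNIV. if j = i then f (axis j 1) else 0)"
    by (intro sum.cong) (auto simp: axis_def)
  also have "\<dots> = f (axis i 1)" by simp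
  finally show ?thesis .
qed

lemma prod_lborel_vec:
  fixes g :: "'n::finite \<Rightarrow> real \<Rightarrow> real"
  assumes int: "\<And>i. integrable lborel (g i)"
  shows "integrable lborel (\<lambda>z::real^'n. \<Prod>i\<in>UNIV. g i (z$i))"
    and "(\<integral>z. (\<Prod>i\<in>UNIV. g i (z$i)) \<partial>(lborel::(real^'n) measure)) = (\<Prod>i\<in>UNIV. integral\<^sup>L lborel (g i))"
proof -
  interpret product_sigma_finite "\<lambda>_::real^'n. lborel :: real measure"
    by standard
  let ?T = "\<lambda>f. \<Sum>b\<in>(Basis::(real^'n) set). f b *\<^sub>R b"
  let ?G = "\<lambda>b::real^'n. g (axis_index b)"
  let ?F = "\<lambda>z::real^'n. \<Prod>i\<in>UNIV. g i (z$i)"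
  have gm: "g i \<in> borel_measurable borel" for i using int[of i] by auto
  have Tm: "?T \<in> measurable (\<Pi>\<^sub>M b\<in>Basis. lborel) borel" by measurable
  have Fm: "?F \<in> borel_measurable borel"
    using gm by measurable
  have FT: "?F (?T f) = (\<Prod>b\<in>Basis. ?G b (f b))" for f
    unfolding sum_Basis_vec_comp prod_Basis_vec by simp
  have intG: "\<And>b. b \<in> Basis \<Longrightarrow> integrable lborel (?G b)" using int by simp
  have "integrable lborel ?F \<longleftrightarrow> integrable (distr (\<Pi>\<^sub>M b\<in>Basis. lborel) borel ?T) ?F"
    using arg_cong[OF lborel_eq, of "\<lambda>M. integrable M ?F"] .
  also have "\<dots> \<longleftrightarrow> integrable (\<Pi>\<^sub>M b\<in>Basis. lborel) (\<lambda>f. ?F (?T f))"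
    by (rule integrable_distr_eq[OF Tm Fm])
  also have "\<dots>" unfolding FT
    by (rule product_integrable_prod) (use intG in auto)
  finally show "integrable lborel ?F" .
  have "integral\<^sup>L lborel ?F = integral\<^sup>L (distr (\<Pi>\<^sub>M b\<in>Basis. lborel) borel ?T) ?F"
    using arg_cong[OF lborel_eq, of "\<lambda>M. integral\<^sup>L M ?F"] .
  also have "\<dots> = integral\<^sup>L (\<Pi>\<^sub>M b\<in>Basis. lborel) (\<lambda>f. ?F (?T f))"
    by (rule integral_distr[OF Tm Fm])
  also have "\<dots> = (\<Prod>b\<in>Basis. integral\<^sup>L lborel (?G b))" unfolding FT
    by (rule product_integral_prod) (use intG in auto)
  also have "\<dots> = (\<Prod>i\<in>UNIV. integral\<^sup>L lborel (g i))"
    by (simp add: prod_Basis_vec)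
  finally show "integral\<^sup>L lborel ?F = (\<Prod>i\<in>UNIV. integral\<^sup>L lborel (g i))" .
qed

definition sg :: "real^'n::finite \<Rightarrow> real" where
  "sg z = (\<Prod>i\<in>UNIV. std_normal_density (z$i))"

lemma sg_int: "integrable lborel (sg :: real^'n::finite \<Rightarrow> real)" "integral\<^sup>L lborel (sg :: real^'n::finite \<Rightarrow> real) = 1"
  using prod_lborel_vec[of "\<lambda>(_::'n). std_normal_density"]
  by (auto simp: sg_def[abs_def])

lemma std_int1: "integrable lborel (\<lambda>t. std_normal_density t * t)"
  using integrable_std_normal_moment[of 1] by simp
lemma std_int2: "integrable lborel (\<lambda>t. std_normal_density t * (t * t))"
  using integrable_std_normal_moment[of 2] by (simp add: power2_eq_square)
lemma std_val1: "integral\<^sup>L lborel (\<lambda>t. std_normal_density t * t) = 0"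
  using integral_std_normal_moment_odd[of 0] by simp
lemma std_val2: "integral\<^sup>L lborel (\<lambda>t. std_normal_density t * (t * t)) = 1"
  using integral_std_normal_moment_even[of 1] by (simp add: power2_eq_square)

lemma sg_mom:
  fixes k l :: "'n::finite"
  shows "integrable lborel (\<lambda>z::real^'n. sg z * (z$k * z$l))"
    and "(\<integral>z. sg z * (z$k * z$l) \<partial>(lborel::(real^'n) measure)) = (if k = l then 1 else 0)"
proof -
  define g where "g i t = std_normal_density t * ((if i = k then t else 1) * (if i = l then t else 1))" for i t
  have eq: "(\<Prod>i\<in>UNIV. g i (z$i)) = sg z * (z$k * z$l)" for z :: "real^'n"
  proof -
    have "(\<Prod>i\<in>UNIV. g i (z$i)) = sg z * ((\<Prod>i\<in>UNIV. (if i = k then z$i else 1)) * (\<Prod>i\<in>UNIV. (if i = l then z$i else 1)))"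
      by (simp add: g_def sg_def prod.distrib)
    also have "(\<Prod>i\<in>UNIV. (if i = k then z$i else 1)) = z$k" by (simp add: prod.delta)
    also have "(\<Prod>i\<in>UNIV. (if i = l then z$i else 1)) = z$l" by (simp add: prod.delta)
    finally show ?thesis .
  qed
  have gi: "integrable lborel (g i)" for i
    using std_int1 std_int2 by (cases "i = k"; cases "i = l") (auto simp: g_def[abs_def])
  show "integrable lborel (\<lambda>z::real^'n. sg z * (z$k * z$l))"
    using prod_lborel_vec(1)[of g, OF gi] unfolding eq .
  have "(\<integral>z. sg z * (z$k * z$l) \<partial>(lborel::(real^'n) measure)) = (\<Prod>i\<in>UNIV. integral\<^sup>L lborel (g i))"
    using prod_lborel_vec(2)[of g, OF gi] unfolding eq .
  also have "\<dots> = (if k = l then 1 else 0)"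
  proof (cases "k = l")
    case True
    have "integral\<^sup>L lborel (g i) = 1" for i
      using True std_val2 by (cases "i = k") (auto simp: g_def[abs_def])
    then show ?thesis using True by simp
  next
    case False
    have "integral\<^sup>L lborel (g k) = 0"
      using False std_val1 by (auto simp: g_def[abs_def])
    then show ?thesis using False by (simp add: prod_zero_iff) blast
  qed
  finally show "(\<integral>z. sg z * (z$k * z$l) \<partial>(lborel::(real^'n) measure)) = (if k = l then 1 else 0)" .
qed

definition bf :: "real^'n^'n \<Rightarrow> real^'n \<Rightarrow> real^'n \<Rightarrow> real" where
  "bf K x y = x \<bullet> (K *v y)"

lemma bf_sym: "transpose K = K \<Longrightarrow> bf K x y = bf K y x"
  unfolding bf_def by (metis dot_lmul_matrix inner_commute vector_transpose_matrix)

lemma bf_diff_left: "bf K (x - y) z = bf K x z - bf K y z"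
  by (simp add: bf_def inner_diff_left)
lemma bf_sum_left: "bf K (sum f S) z = (\<Sum>x\<in>S. bf K (f x) z)"
  by (simp add: bf_def inner_sum_left)
lemma bf_scale_left: "bf K (c *\<^sub>R x) z = c * bf K x z"
  by (simp add: bf_def)
lemma bf_zero_right: "bf K x 0 = 0"
  by (simp add: bf_def)

lemma basis_orth_form:
  fixes K :: "real^'n^'n" and B :: "(real^'n) set"
  assumes pd: "posdef K" and fB: "finite B"
  shows "\<exists>C. finite C \<and> card C \<le> card B \<and> span C = span B \<and>
             (\<forall>x\<in>C. \<forall>y\<in>C. x \<noteq> y \<longrightarrow> bf K x y = 0)"
  using fB
proof (induct rule: finite_induct)
  case empty
  then show ?case by (intro exI[of _ "{}"]) auto
next
  case (insert a B)
  have sym: "transpose K = K" using pd by (simp add: posdef_def)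
  have pos: "y \<noteq> 0 \<Longrightarrow> 0 < bf K y y" for y using pd by (simp add: posdef_def bf_def)
  from insert obtain C where C: "finite C" "card C \<le> card B"
    "span C = span B" "\<forall>x\<in>C. \<forall>y\<in>C. x \<noteq> y \<longrightarrow> bf K x y = 0" by blast
  let ?a = "a - sum (\<lambda>x. (bf K x a / bf K x x) *\<^sub>R x) C"
  let ?C = "insert ?a C"
  from C(1) have fC: "finite ?C" by simp
  have cC: "card ?C \<le> card (insert a B)"
    using C insert.hyps card_insert_if by fastforce
  {
    fix x k
    have th0: "\<And>(a::real^'n) b c. a - (b - c) = c + (a - b)"
      by (simp add: field_simps)
    have "x - k *\<^sub>R (a - (\<Sum>x\<in>C. (bf K x a / bf K x x) *\<^sub>R x)) \<in> span C \<longleftrightarrow> x - k *\<^sub>R a \<in> span C"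
      unfolding scaleR_right_diff_distrib th0
      by (intro span_add_eq span_scale span_sum span_base)
  }
  then have SC: "span ?C = span (insert a B)"
    unfolding set_eq_iff span_breakdown_eq C(3)[symmetric] by auto
  have orth: "bf K ?a y = 0" if yC: "y \<in> C" for y
  proof (cases "y = 0")
    case True then show ?thesis by (simp add: bf_zero_right)
  next
    case False
    have "bf K ?a y = bf K a y - (\<Sum>x\<in>C. (bf K x a / bf K x x) * bf K x y)"
      by (simp add: bf_diff_left bf_sum_left bf_scale_left)
    also have "(\<Sum>x\<in>C. (bf K x a / bf K x x) * bf K x y) = (bf K y a / bf K y y) * bf K y y"
      using C(1,4) yC by (subst sum.remove[of _ y]) (auto intro!: sum.neutral)
    also have "\<dots> = bf K a y" using pos[OF False] bf_sym[OF sym, of y a] by simp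
    finally show ?thesis by simp
  qed
  have "\<forall>x\<in>?C. \<forall>y\<in>?C. x \<noteq> y \<longrightarrow> bf K x y = 0"
    using C(4) orth bf_sym[OF sym] by auto
  with fC cC SC show ?case by blast
qed

lemma tKM_entry:
  fixes M K :: "real^'n^'n"
  shows "(transpose M ** K ** M) $ i $ j = bf K (column i M) (column j M)"
proof -
  have "(transpose M ** K ** M) $ i $ j = (\<Sum>l\<in>UNIV. (\<Sum>k\<in>UNIV. M$k$i * K$k$l) * M$l$j)"
    by (simp add: matrix_matrix_mult_def transpose_def)
  also have "\<dots> = (\<Sum>l\<in>UNIV. \<Sum>k\<in>UNIV. M$k$i * K$k$l * M$l$j)"
    by (simp add: sum_distrib_right)
  also have "\<dots> = (\<Sum>k\<in>UNIV. \<Sum>l\<in>UNIV. M$k$i * K$k$l * M$l$j)"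
    by (rule sum.swap)
  also have "\<dots> = bf K (column i M) (column j M)"
    by (simp add: bf_def inner_vec_def matrix_vector_mult_def column_def sum_distrib_left mult.assoc)
  finally show ?thesis .
qed

lemma bf_scale_right: "bf K x (c *\<^sub>R y) = c * bf K x y"
  by (simp add: bf_def matrix_vector_mult_scaleR)

lemma posdef_factor:
  fixes K :: "real^'n^'n"
  assumes pd: "posdef K"
  shows "\<exists>M::real^'n^'n. transpose M ** K ** M = mat 1"
proof -
  have pos: "y \<noteq> 0 \<Longrightarrow> 0 < bf K y y" for y using pd by (simp add: posdef_def bf_def)
  obtain C where C: "finite C" "card C \<le> card (Basis :: (real^'n) set)" "span C = span (Basis :: (real^'n) set)"
    "\<forall>x\<in>C. \<forall>y\<in>C. x \<noteq> y \<longrightarrow> bf K x y = 0"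
    using basis_orth_form[OF pd, of "Basis :: (real^'n) set"] by auto
  have spC: "span C = UNIV" using C(3) by (simp add: span_Basis)
  have "dim (UNIV :: (real^'n) set) \<le> card C"
    by (rule span_card_ge_dim) (use spC C(1) in auto)
  then have cC: "card C = card (Basis :: (real^'n) set)" using C(2) by simp
  have "independent C"
    using card_eq_dim[of C UNIV] cC C(1) spC by simp
  then have C0: "0 \<notin> C" using dependent_zero by blast
  have "card (UNIV :: 'n set) = card C" using cC by simp
  then obtain h where h: "bij_betw h (UNIV :: 'n set) C"
    using finite_same_card_bij[of "UNIV :: 'n set" C] C(1) by auto
  have hC: "h i \<in> C" for i using h by (auto simp: bij_betw_def)
  have hinj: "h i = h j \<Longrightarrow> i = j" for i j using h by (auto simp: bij_betw_def inj_def)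
  have hpos: "0 < bf K (h i) (h i)" for i using pos hC C0 by metis
  define M where "M = (\<chi> i j. (h j $ i) / sqrt (bf K (h j) (h j)))"
  have col: "column j M = (1 / sqrt (bf K (h j) (h j))) *\<^sub>R h j" for j
    by (simp add: M_def column_def vec_eq_iff)
  have "transpose M ** K ** M = mat 1"
  proof (rule vec_eq_iff[THEN iffD2, rule_format], rule vec_eq_iff[THEN iffD2, rule_format])
    fix i j
    have "(transpose M ** K ** M) $ i $ j =
        (1 / sqrt (bf K (h i) (h i))) * (1 / sqrt (bf K (h j) (h j))) * bf K (h i) (h j)"
      unfolding tKM_entry col bf_scale_left bf_scale_right by simp
    also have "\<dots> = mat 1 $ i $ j"
    proof (cases "i = j")
      case True
      then show ?thesis using hpos[of i] by (simp add: mat_def real_sqrt_mult[symmetric])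
    next
      case False
      then have "bf K (h i) (h j) = 0" using C(4) hC hinj by metis
      then show ?thesis using False by (simp add: mat_def)
    qed
    finally show "(transpose M ** K ** M) $ i $ j = mat 1 $ i $ j" .
  qed
  then show ?thesis by blast
qed

lemma sg_cont: "continuous_on UNIV (sg :: real^'n::finite \<Rightarrow> real)"
  unfolding sg_def[abs_def] std_normal_density_def
  by (intro continuous_intros) auto

lemma sg_closed: "sg (z::real^'n::finite) = exp (- (z \<bullet> z) / 2) / sqrt (2 * pi) ^ CARD('n)"
proof -
  have "sg z = (\<Prod>i\<in>UNIV. (1 / sqrt (2 * pi)) * exp (- (z$i)\<^sup>2 / 2))"
    by (simp add: sg_def std_normal_density_def)
  also have "\<dots> = (1 / sqrt (2 * pi)) ^ CARD('n) * exp (\<Sum>i\<in>UNIV. - (z$i)\<^sup>2 / 2)"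
    by (subst prod.distrib) (simp add: exp_sum)
  also have "(\<Sum>i\<in>UNIV. - (z$i)\<^sup>2 / 2) = - (z \<bullet> z) / 2"
    by (simp add: inner_vec_def power2_eq_square sum_divide_distrib sum_negf)
  finally show ?thesis by (simp add: power_one_over field_simps)
qed

lemma gauss_repr:
  fixes K :: "real^'n^'n"
  assumes pd: "posdef K"
  shows "\<exists>N::real^'n^'n. det N \<noteq> 0 \<and> (\<forall>x. gauss_density K x = \<bar>det N\<bar> * sg (N *v x)) \<and>
           matrix_inv N ** transpose (matrix_inv N) = K \<and> 0 < det K \<and> K ** matrix_inv K = mat 1"
proof -
  obtain M :: "real^'n^'n" where M: "transpose M ** K ** M = mat 1"
    using posdef_factor[OF pd] by blast
  let ?N = "transpose M"
  have "det ?N * det K * det M = 1"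
    using arg_cong[OF M, of det] by (simp add: det_mul)
  then have dM: "det M \<noteq> 0" by auto
  have dK: "det K = 1 / (det M)\<^sup>2"
    using \<open>det ?N * det K * det M = 1\<close> dM by (simp add: field_simps power2_eq_square)
  have dKp: "0 < det K" using dK dM by simp
  have "transpose M ** (K ** M) = mat 1" using M by (simp add: matrix_mul_assoc)
  then have "(K ** M) ** transpose M = mat 1" using matrix_left_right_inverse by blast
  then have KI: "K ** (M ** transpose M) = mat 1" by (simp add: matrix_mul_assoc)
  then have Kinv: "matrix_inv K = M ** transpose M" by (rule minv_unique)
  have quad: "x \<bullet> (matrix_inv K *v x) = (?N *v x) \<bullet> (?N *v x)" for x
    unfolding Kinv by (simp add: matrix_vector_mul_assoc[symmetric] dot_lmul_matrix[symmetric])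
  have sq: "sqrt ((2 * pi) ^ CARD('n) * det K) = sqrt (2 * pi) ^ CARD('n) / \<bar>det M\<bar>"
  proof -
    have s1: "sqrt ((2*pi)^CARD('n)) = sqrt(2*pi)^CARD('n)" by (rule real_sqrt_power)
    have s2: "sqrt (1/(det M)\<^sup>2) = 1/\<bar>det M\<bar>" by (simp only: real_sqrt_divide real_sqrt_one real_sqrt_abs)
    show ?thesis unfolding dK real_sqrt_mult s1 s2 by simp
  qed
  have g: "gauss_density K x = \<bar>det ?N\<bar> * sg (?N *v x)" for x
    unfolding gauss_density_def quad sq sg_closed using dM by simp
  let ?P = "matrix_inv ?N"
  have dN: "det ?N \<noteq> 0" using dM by simp
  have PN: "?P ** ?N = mat 1" using minv(2)[OF dN] .
  have NPt: "transpose ?N ** transpose ?P = mat 1"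
    using arg_cong[OF PN, of transpose] by (simp add: matrix_transpose_mul)
  have "K = (?P ** ?N) ** K ** (transpose ?N ** transpose ?P)"
    by (simp only: PN NPt matrix_mul_lid matrix_mul_rid)
  also have "\<dots> = ?P ** (?N ** K ** transpose ?N) ** transpose ?P"
    by (simp add: matrix_mul_assoc)
  also have "\<dots> = ?P ** transpose ?P" using M by simp
  finally have PP: "?P ** transpose ?P = K" by simp
  show ?thesis using dN g PP dKp KI Kinv by (intro exI[of _ ?N]) auto
qed

lemma mv_cont: "continuous_on UNIV (\<lambda>z. (P::real^'n^'m) *v z)"
  by (intro linear_continuous_on matrix_vector_mul_bounded_linear)

lemma gauss_facts:
  fixes K :: "real^'n^'n"
  assumes pd: "posdef K"
  shows "integrable lborel (gauss_density K)"
    and "integral\<^sup>L lborel (gauss_density K) = 1"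
    and "integrable lborel (\<lambda>x. gauss_density K x * (x$i * x$j))"
    and "(\<integral>x. gauss_density K x * (x$i * x$j) \<partial>lborel) = K$i$j"
proof -
  obtain N :: "real^'n^'n" where dN: "det N \<noteq> 0" and g: "\<And>x. gauss_density K x = \<bar>det N\<bar> * sg (N *v x)"
    and PP: "matrix_inv N ** transpose (matrix_inv N) = K"
    using gauss_repr[OF pd] by blast
  have sgm: "sg \<in> borel_measurable borel" using sg_cont by (rule borel_measurable_continuous_onI)
  have ge: "gauss_density K = (\<lambda>x. \<bar>det N\<bar> * sg (N *v x))" using g by auto
  show "integrable lborel (gauss_density K)"
    unfolding ge using cov_lin(1)[OF dN sgm] sg_int(1) by blast
  show "integral\<^sup>L lborel (gauss_density K) = 1"
    unfolding ge using cov_lin(2)[OF dN sgm] sg_int(2) by metis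
  let ?P = "matrix_inv N"
  define h where "h z = sg z * ((?P *v z)$i * (?P *v z)$j)" for z
  have hm: "h \<in> borel_measurable borel"
    unfolding h_def[abs_def]
    by (intro borel_measurable_continuous_onI continuous_intros sg_cont mv_cont)
  have PN: "?P *v (N *v x) = x" for x
    by (simp add: matrix_vector_mul_assoc minv(2)[OF dN])
  have hN: "\<bar>det N\<bar> * h (N *v x) = gauss_density K x * (x$i * x$j)" for x
    by (simp add: h_def PN g)
  have hsum: "h z = (\<Sum>l\<in>UNIV. \<Sum>k\<in>UNIV. (?P$i$k * ?P$j$l) * (sg z * (z$k * z$l)))" for z
    by (simp add: h_def matrix_vector_mult_def sum_product sum_distrib_left mult_ac)
  have hint: "integrable lborel h"
    unfolding hsum[abs_def] by (intro Bochner_Integration.integrable_sum integrable_mult_right sg_mom(1))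
  have "integral\<^sup>L lborel h = (\<Sum>l\<in>UNIV. \<Sum>k\<in>UNIV. (?P$i$k * ?P$j$l) * (if k = l then 1 else 0))"
    unfolding hsum[abs_def]
    by (simp add: Bochner_Integration.integral_sum Bochner_Integration.integrable_sum integrable_mult_right sg_mom)
  also have "\<dots> = (\<Sum>k\<in>UNIV. ?P$i$k * ?P$j$k)"
    by (simp add: if_distrib cong: if_cong)
  also have "\<dots> = K$i$j"
    unfolding PP[symmetric] by (simp add: matrix_matrix_mult_def transpose_def)
  finally have hval: "integral\<^sup>L lborel h = K$i$j" .
  show "integrable lborel (\<lambda>x. gauss_density K x * (x$i * x$j))"
    using cov_lin(1)[OF dN hm] hint unfolding hN by blast
  show "(\<integral>x. gauss_density K x * (x$i * x$j) \<partial>lborel) = K$i$j"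
    using cov_lin(2)[OF dN hm] hval unfolding hN by metis
qed

lemma quad_expand: "x \<bullet> (D *v x) = (\<Sum>i\<in>UNIV. \<Sum>j\<in>UNIV. D$i$j * (x$i * x$j))"
  for x :: "real^'n" and D :: "real^'n^'n"
  by (simp add: inner_vec_def matrix_vector_mult_def sum_distrib_left mult_ac)

lemma gauss_quad:
  fixes K D :: "real^'n^'n"
  assumes pd: "posdef K"
  shows "integrable lborel (\<lambda>x. gauss_density K x * (x \<bullet> (D *v x)))"
    and "(\<integral>x. gauss_density K x * (x \<bullet> (D *v x)) \<partial>lborel) = trace (D ** K)"
proof -
  have eq: "gauss_density K x * (x \<bullet> (D *v x)) =
      (\<Sum>i\<in>UNIV. \<Sum>j\<in>UNIV. D$i$j * (gauss_density K x * (x$i * x$j)))" for x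
    by (simp add: quad_expand sum_distrib_left mult_ac)
  show "integrable lborel (\<lambda>x. gauss_density K x * (x \<bullet> (D *v x)))"
    unfolding eq by (intro Bochner_Integration.integrable_sum integrable_mult_right gauss_facts(3)[OF pd])
  have sym: "K$j$i = K$i$j" for i j
    using pd unfolding posdef_def by (metis transpose_def vec_lambda_beta)
  have "(\<integral>x. gauss_density K x * (x \<bullet> (D *v x)) \<partial>lborel) = (\<Sum>i\<in>UNIV. \<Sum>j\<in>UNIV. D$i$j * K$i$j)"
    unfolding eq
    by (simp add: Bochner_Integration.integral_sum Bochner_Integration.integrable_sum integrable_mult_right gauss_facts[OF pd])
  also have "\<dots> = trace (D ** K)"
    by (simp add: trace_def matrix_matrix_mult_def sym)
  finally show "(\<integral>x. gauss_density K x * (x \<bullet> (D *v x)) \<partial>lborel) = trace (D ** K)" .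
qed

lemma gauss_ent:
  fixes K D :: "real^'n^'n"
  assumes pd: "posdef K"
  shows "integrable lborel (ent_integrand D (gauss_density K))"
    and "ent_term D (gauss_density K) =
           - trace (D ** K) / 2 + real CARD('n) / 2 + ln ((2 * pi) ^ CARD('n) * det K) / 2"
proof -
  obtain N :: "real^'n^'n" where dK: "0 < det K" and KI: "K ** matrix_inv K = mat 1"
    using gauss_repr[OF pd] by blast
  let ?c = "(2 * pi) ^ CARD('n) * det K"
  have cpos: "0 < ?c" using dK by simp
  have ln_g: "ln (gauss_density K x) = - (x \<bullet> (matrix_inv K *v x)) / 2 - ln ?c / 2" for x
    using cpos dK by (simp add: gauss_density_def ln_div ln_sqrt)
  have eq: "ent_integrand D (gauss_density K) x =
      (-1/2) * (gauss_density K x * (x \<bullet> (D *v x))) + (1/2) * (gauss_density K x * (x \<bullet> (matrix_inv K *v x)))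
      + (ln ?c / 2) * gauss_density K x" for x
    unfolding ent_integrand_def ln_g by (simp add: algebra_simps)
  have I1: "integrable lborel (\<lambda>x. gauss_density K x * (x \<bullet> (D *v x)))" by (rule gauss_quad(1)[OF pd])
  have I2: "integrable lborel (\<lambda>x. gauss_density K x * (x \<bullet> (matrix_inv K *v x)))" by (rule gauss_quad(1)[OF pd])
  have I3: "integrable lborel (gauss_density K)" by (rule gauss_facts(1)[OF pd])
  show "integrable lborel (ent_integrand D (gauss_density K))"
    unfolding eq[abs_def] using I1 I2 I3 by (intro Bochner_Integration.integrable_add integrable_mult_right) auto
  have KI': "matrix_inv K ** K = mat 1" using KI matrix_left_right_inverse by blast
  have "ent_term D (gauss_density K) = (-1/2) * trace (D ** K) + (1/2) * trace (matrix_inv K ** K) + (ln ?c / 2) * 1"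
    unfolding ent_term_def eq[abs_def]
    using I1 I2 I3 gauss_quad(2)[OF pd] gauss_facts(2)[OF pd]
    by (simp add: Bochner_Integration.integral_add Bochner_Integration.integrable_add)
  also have "\<dots> = - trace (D ** K) / 2 + real CARD('n) / 2 + ln ?c / 2"
    unfolding KI' trace_I by simp
  finally show "ent_term D (gauss_density K) = - trace (D ** K) / 2 + real CARD('n) / 2 + ln ?c / 2" .
qed

lemma integrable_prod_pair:
  fixes a b :: "real^'n \<Rightarrow> real"
  assumes ia: "integrable lborel a" and ib: "integrable lborel b"
  shows "integrable (lborel :: ((real^'n) \<times> (real^'n)) measure) (\<lambda>(x,y). a x * b y)"
    and "integral\<^sup>L (lborel :: ((real^'n) \<times> (real^'n)) measure) (\<lambda>(x,y). a x * b y) = integral\<^sup>L lborel a * integral\<^sup>L lborel b"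
proof -
  have am: "a \<in> borel_measurable borel" and bm: "b \<in> borel_measurable borel" using ia ib by auto
  have m: "(\<lambda>(x,y). a x * b y) \<in> borel_measurable (lborel \<Otimes>\<^sub>M lborel)"
    using am bm by measurable
  have I: "integrable (lborel \<Otimes>\<^sub>M lborel) (\<lambda>(x,y). a x * b y)"
  proof (rule lborel_pair.Fubini_integrable[OF m])
    have "(\<lambda>x. \<integral>y. norm (case (x, y) of (x, y) \<Rightarrow> a x * b y) \<partial>lborel) = (\<lambda>x. \<bar>a x\<bar> * (\<integral>y. \<bar>b y\<bar> \<partial>lborel))"
      by (simp add: abs_mult)
    moreover have "integrable lborel (\<lambda>x. \<bar>a x\<bar> * (\<integral>y. \<bar>b y\<bar> \<partial>lborel))"
      using ia by (intro integrable_mult_left integrable_abs)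
    ultimately show "integrable lborel (\<lambda>x. \<integral>y. norm (case (x, y) of (x, y) \<Rightarrow> a x * b y) \<partial>lborel)" by simp
    show "AE x in lborel. integrable lborel (\<lambda>y. case (x, y) of (x, y) \<Rightarrow> a x * b y)"
      using ib by simp
  qed
  then show "integrable (lborel :: ((real^'n) \<times> (real^'n)) measure) (\<lambda>(x,y). a x * b y)"
    by (simp add: lborel_prod)
  have "integral\<^sup>L (lborel \<Otimes>\<^sub>M lborel) (\<lambda>(x,y). a x * b y) = (\<integral>x. (\<integral>y. a x * b y \<partial>lborel) \<partial>lborel)"
    using lborel_pair.integral_fst[of "\<lambda>x y. a x * b y"] I by simp
  also have "\<dots> = integral\<^sup>L lborel a * integral\<^sup>L lborel b"
    by simp
  finally show "integral\<^sup>L (lborel :: ((real^'n) \<times> (real^'n)) measure) (\<lambda>(x,y). a x * b y) = integral\<^sup>L lborel a * integral\<^sup>L lborel b"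
    by (simp add: lborel_prod)
qed

lemma gauss_nonneg: "posdef K \<Longrightarrow> 0 \<le> gauss_density K x"
  using gauss_repr[of K] by (auto simp: gauss_density_def)

lemma prod_feasible:
  fixes KU KV DU DV :: "real^'n^'n"
  assumes pU: "posdef KU" and pV: "posdef KV" and sK: "KU + KV = mat 1"
  defines "g \<equiv> (\<lambda>(u,v). gauss_density KU u * gauss_density KV v)"
  shows "margU g = gauss_density KU" "margV g = gauss_density KV" "P_feasible DU DV g"
proof -
  have iU: "integrable lborel (gauss_density KU)" and vU: "integral\<^sup>L lborel (gauss_density KU) = 1"
    using gauss_facts[OF pU] by auto
  have iV: "integrable lborel (gauss_density KV)" and vV: "integral\<^sup>L lborel (gauss_density KV) = 1"
    using gauss_facts[OF pV] by auto
  show mU: "margU g = gauss_density KU"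
    by (simp add: margU_def g_def fun_eq_iff vV)
  show mV: "margV g = gauss_density KV"
    by (simp add: margV_def g_def fun_eq_iff vU)
  have ig: "integrable lborel g" and vg: "(\<integral>z. g z \<partial>lborel) = 1"
    using integrable_prod_pair[OF iU iV] vU vV unfolding g_def by auto
  have gm: "g \<in> borel_measurable lborel" using ig by auto
  have gnn: "\<forall>z. 0 \<le> g z"
    using gauss_nonneg[OF pU] gauss_nonneg[OF pV] by (auto simp: g_def)
  have mom: "integrable lborel (\<lambda>(u, v). g (u, v) * (u$i * u$j + v$i * v$j)) \<and>
            (\<integral>(u, v). g (u, v) * (u$i * u$j + v$i * v$j) \<partial>lborel) = (if i = j then 1 else 0)" for i j
  proof -
    let ?a1 = "\<lambda>u. gauss_density KU u * (u$i * u$j)"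
    let ?b2 = "\<lambda>v. gauss_density KV v * (v$i * v$j)"
    have e: "(\<lambda>(u, v). g (u, v) * (u$i * u$j + v$i * v$j)) =
        (\<lambda>z. (\<lambda>(u,v). ?a1 u * gauss_density KV v) z + (\<lambda>(u,v). gauss_density KU u * ?b2 v) z)"
      by (auto simp: g_def fun_eq_iff algebra_simps)
    have i1: "integrable lborel (\<lambda>(u,v). ?a1 u * gauss_density KV v)"
      and v1: "integral\<^sup>L lborel (\<lambda>(u,v). ?a1 u * gauss_density KV v) = KU$i$j"
      using integrable_prod_pair[OF gauss_facts(3)[OF pU] iV] gauss_facts(4)[OF pU] vV by auto
    have i2: "integrable lborel (\<lambda>(u,v). gauss_density KU u * ?b2 v)"
      and v2: "integral\<^sup>L lborel (\<lambda>(u,v). gauss_density KU u * ?b2 v) = KV$i$j"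
      using integrable_prod_pair[OF iU gauss_facts(3)[OF pV]] gauss_facts(4)[OF pV] vU by auto
    have "KU$i$j + KV$i$j = (if i = j then 1 else 0)"
      using arg_cong[OF sK, of "\<lambda>M. M$i$j"] by (simp add: mat_def)
    then show ?thesis unfolding e using i1 i2 v1 v2
      by (simp add: Bochner_Integration.integral_add)
  qed
  show "P_feasible DU DV g"
    unfolding P_feasible_def mU mV
    using gm gnn ig vg mom gauss_ent(1)[OF pU] gauss_ent(1)[OF pV] by blast
qed

lemma ent_term_gauss_ln:
  fixes K D :: "real^'n^'n"
  assumes pd: "posdef K"
  shows "ent_term D (gauss_density K) =
           (- trace (D ** K) + real CARD('n) + ln ((2 * pi) ^ CARD('n)) + ln (det K)) / 2"
proof -
  obtain N :: "real^'n^'n" where dK: "0 < det K"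
    using gauss_repr[OF pd] by blast
  show ?thesis using gauss_ent(2)[OF pd, of D] dK by (simp add: ln_mult)
qed

theorem theorem4:
  fixes lam :: real
    and KU0 KV0 S1 S2 A B W1 W2 DU DV KU KV :: "real^'n^'n"
    and f :: "(real^'n) \<times> (real^'n) \<Rightarrow> real"
  assumes lam: "lam > 1"
    and pd0: "posdef KU0" "posdef KV0" "posdef S1" "posdef S2"
    and sum0: "KU0 + KV0 = mat 1"
    and A_def: "A = KV0 ** matrix_inv (mat 1 + S2)"
    and W1_def: "W1 = KV0 - KV0 ** matrix_inv (mat 1 + S2) ** KV0"
    and B_def: "B = KU0 ** matrix_inv (KU0 + S1)"
    and W2_def: "W2 = KU0 - KU0 ** matrix_inv (KU0 + S1) ** KU0"
    and DU_def: "DU = matrix_inv W2 - matrix_inv W2 ** B - transpose B ** matrix_inv W2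
                      + transpose B ** matrix_inv W2 ** B"
    and DV_def: "DV = matrix_inv W1 - transpose A ** matrix_inv W1 - matrix_inv W1 ** A"
    and feas: "P_feasible DU DV f"
    and opt: "\<And>g. P_feasible DU DV g \<Longrightarrow> P_obj lam DU DV g \<le> P_obj lam DU DV f"
    and pdK: "posdef KU" "posdef KV"
    and sumK: "KU + KV = mat 1"
    and margU_gauss: "AE u in lborel. margU f u = gauss_density KU u"
    and margV_gauss: "AE v in lborel. margV f v = gauss_density KV v"
  shows "\<forall>KU' KV'. posdef KU' \<and> posdef KV' \<and> KU' + KV' = mat 1 \<longrightarrow>
           K_obj lam DU DV KU' KV' \<le> K_obj lam DU DV KU KV"
proof (intro allI impI, elim conjE)
  fix KU' KV' :: "real^'n^'n"
  assume pU': "posdef KU'" and pV': "posdef KV'" and s': "KU' + KV' = mat 1"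
  let ?g = "\<lambda>(u,v). gauss_density KU' u * gauss_density KV' v"
  have gf: "P_feasible DU DV ?g" and mU: "margU ?g = gauss_density KU'" and mV: "margV ?g = gauss_density KV'"
    using prod_feasible[OF pU' pV' s'] by auto
  have le: "P_obj lam DU DV ?g \<le> P_obj lam DU DV f" by (rule opt[OF gf])
  have Pg: "P_obj lam DU DV ?g = ent_term DU (gauss_density KU') + lam * ent_term DV (gauss_density KV')"
    by (simp add: P_obj_def mU mV)
  have fi: "integrable lborel (ent_integrand DU (margU f))" "integrable lborel (ent_integrand DV (margV f))"
    using feas by (auto simp: P_feasible_def)
  have eU: "ent_term DU (margU f) = ent_term DU (gauss_density KU)"
    unfolding ent_term_def
  proof (rule integral_cong_AE)
    show "ent_integrand DU (margU f) \<in> borel_measurable lborel" using fi(1) by auto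
    show "ent_integrand DU (gauss_density KU) \<in> borel_measurable lborel"
      using gauss_ent(1)[OF pdK(1)] by auto
    show "AE x in lborel. ent_integrand DU (margU f) x = ent_integrand DU (gauss_density KU) x"
      using margU_gauss by eventually_elim (simp add: ent_integrand_def)
  qed
  have eV: "ent_term DV (margV f) = ent_term DV (gauss_density KV)"
    unfolding ent_term_def
  proof (rule integral_cong_AE)
    show "ent_integrand DV (margV f) \<in> borel_measurable lborel" using fi(2) by auto
    show "ent_integrand DV (gauss_density KV) \<in> borel_measurable lborel"
      using gauss_ent(1)[OF pdK(2)] by auto
    show "AE x in lborel. ent_integrand DV (margV f) x = ent_integrand DV (gauss_density KV) x"
      using margV_gauss by eventually_elim (simp add: ent_integrand_def)
  qed
  have Pf: "P_obj lam DU DV f = ent_term DU (gauss_density KU) + lam * ent_term DV (gauss_density KV)"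
    by (simp add: P_obj_def eU eV)
  let ?C = "real CARD('n) + ln ((2 * pi) ^ CARD('n))"
  have k1: "2 * P_obj lam DU DV ?g = K_obj lam DU DV KU' KV' + (1 + lam) * ?C"
    unfolding Pg K_obj_def ent_term_gauss_ln[OF pU'] ent_term_gauss_ln[OF pV']
    by (simp add: field_simps)
  have k2: "2 * P_obj lam DU DV f = K_obj lam DU DV KU KV + (1 + lam) * ?C"
    unfolding Pf K_obj_def ent_term_gauss_ln[OF pdK(1)] ent_term_gauss_ln[OF pdK(2)]
    by (simp add: field_simps)
  show "K_obj lam DU DV KU' KV' \<le> K_obj lam DU DV KU KV"
    using le k1 k2 by linarith
qed

end
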